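(* If $k\ge2$ is an integer, there is no $k$-tuple $(a_1,\dots,a_k)$ of real numbers satisfying $$0<a_i<|a_1+\cdots+a_{i-1}-(a_{i+1}+\cdots+a_k)|\quad\text{for all }1\le i\le k.$$
   Context: Empty sums are zero. *)

theory Defs
  imports Main Complex_Main
begin

end

theory Submission
  imports Defs
begin

lemma split_sum:
  fixes a :: "nat \<Rightarrow> real"
  assumes "1 \<le> i" "i \<le> k"
  shows "(\<Sum>j\<in>{1..k}. a j) = (\<Sum>j\<in>{1..<i}. a j) + a i + (\<Sum>j\<in>{i<..k}. a j)"
proof -
  have e: "{1..k} = {1..<i} \<union> ({i} \<union> {i<..k})" using assms by auto
  show ?thesis unfolding e
    by (subst sum.union_disjoint) (auto simp: sum.union_disjoint)
qed

theorem mainTheorem7: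
  fixes k :: nat
  assumes "k \<ge> 2"
  shows "\<not> (\<exists>a :: nat \<Rightarrow> real. \<forall>i\<in>{1..k}.
            0 < a i \<and> a i < \<bar>(\<Sum>j\<in>{1..<i}. a j) - (\<Sum>j\<in>{i<..k}. a j)\<bar>)"
proof
  assume "\<exists>a :: nat \<Rightarrow> real. \<forall>i\<in>{1..k}.
            0 < a i \<and> a i < \<bar>(\<Sum>j\<in>{1..<i}. a j) - (\<Sum>j\<in>{i<..k}. a j)\<bar>"
  then obtain a :: "nat \<Rightarrow> real" where H: "\<forall>i\<in>{1..k}.
            0 < a i \<and> a i < \<bar>(\<Sum>j\<in>{1..<i}. a j) - (\<Sum>j\<in>{i<..k}. a j)\<bar>" by blast
  define S where "S = (\<Sum>j\<in>{1..k}. a j)"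
  define P where "P i = (\<Sum>j\<in>{1..<i}. a j)" for i
  have step: "2 * P i < S \<Longrightarrow> 2 * P (Suc i) < S" if "1 \<le> i" "i \<le> k" for i
  proof -
    assume h: "2 * P i < S"
    have R: "(\<Sum>j\<in>{i<..k}. a j) = S - P i - a i"
      using split_sum[OF that, of a] unfolding S_def P_def by linarith
    have PS: "P (Suc i) = P i + a i" unfolding P_def using that by simp
    have "a i < \<bar>P i - (\<Sum>j\<in>{i<..k}. a j)\<bar>" using H that unfolding P_def by auto
    hence "a i < \<bar>P i - (S - P i - a i)\<bar>" using R by simp
    with h PS show ?thesis by (auto simp: abs_if split: if_splits)
  qed
  have Spos: "S > 0" unfolding S_def using H assms
    by (intro sum_pos) auto
  have main: "i \<le> k \<Longrightarrow> 2 * P (Suc i) < S" for i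
  proof (induction i)
    case 0
    have "0 < a 1" using H assms by auto
    moreover have "a 1 < \<bar>0 - (\<Sum>j\<in>{1<..k}. a j)\<bar>"
      using H assms by (metis atLeastAtMost_iff atLeastLessThan_empty le_numeral_extra(4) one_le_numeral order_trans sum.empty)
    moreover have "(\<Sum>j\<in>{1<..k}. a j) = S - 0 - a 1"
      using assms split_sum[of 1 k a] unfolding S_def by simp
    ultimately show ?case using Spos unfolding P_def by (auto simp: abs_if split: if_splits)
  next
    case (Suc i)
    then show ?case using step[of "Suc i"] by simp
  qed
  have "2 * P (Suc k) < S" using main by simp
  moreover have "P (Suc k) = S" unfolding P_def S_def
    by (metis atLeastLessThanSuc_atLeastAtMost)
  ultimately show False using Spos by simp
qed

end
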